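(* Let $\kappa > \omega$ be a regular cardinal. Suppose $F \subseteq [\kappa]^\kappa$ is an unreaped family with $|F| = \mathfrak{r}(\kappa)$, and suppose there is a club $E_1 \subseteq \kappa$ such that for every club $E \subseteq E_1$ there exists $A \in F$ with $|A \setminus \mathrm{set}(E, E_1)| < \kappa$. Then $\mathfrak{d}(\kappa) \leq \mathfrak{r}(\kappa)$.
   Context: For $A \in [\kappa]^\kappa$ define $s_A:\kappa\to A$ by $s_A(\alpha) = \min(A \setminus (\alpha+1))$. For clubs $E_2 \subseteq E_1 \subseteq \kappa$ and $\xi \in \kappa$ let $\mathrm{set}(E_1,\xi) = \{\zeta : \xi \leq \zeta < s_{E_1}(\xi)\}$ and $\mathrm{set}(E_2,E_1) = \bigcup\{\mathrm{set}(E_1,\xi) : \xi \in E_2\}$. For $F \subseteq [\kappa]^\kappa$ and $B \subseteq \kappa$, $B$ reaps $F$ if $|A \cap B| = |A \cap (\kappa \setminus B)| = \kappa$ for every $A \in F$; $F$ is unreaped if no $B \subseteq \kappa$ reaps $F$; $\mathfrak{r}(\kappa)$ is the least size of an unreaped family in $[\kappa]^\kappa$. For $f,g\in\kappa^\kappa$, $f \leq^* g$ means $|\{\alpha : g(\alpha)<f(\alpha)\}|<\kappa$; $F\subseteq \kappa^\kappa$ is dominating if every $g \in \kappa^\kappa$ satisfies $g \leq^* f$ for some $f\in F$; $\mathfrak{d}(\kappa)$ is the least size of a dominating family. *)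

theory Defs
  imports Main "HOL-Library.Countable_Set"
begin

text \<open>The cardinal kappa is represented by a well-ordered type 'k: the ordinals below
kappa are the elements of 'k, ordered by the type's order.\<close>

definition card_less :: "'a set \<Rightarrow> 'b set \<Rightarrow> bool" where
  "card_less A B \<longleftrightarrow> (card_of A, card_of B) \<in> ordLess"

definition card_leq :: "'a set \<Rightarrow> 'b set \<Rightarrow> bool" where
  "card_leq A B \<longleftrightarrow> (card_of A, card_of B) \<in> ordLeq"

definition card_eq :: "'a set \<Rightarrow> 'b set \<Rightarrow> bool" where
  "card_eq A B \<longleftrightarrow> (card_of A, card_of B) \<in> ordIso"

definition uncountable_regular_cardinal :: "'k::wellorder itself \<Rightarrow> bool" where
  "uncountable_regular_cardinal _ \<longleftrightarrow>
     \<not> countable (UNIV :: 'k set) \<and>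
     (\<forall>\<alpha>::'k. card_less {\<beta>. \<beta> < \<alpha>} (UNIV :: 'k set)) \<and>
     (\<forall>X::'k set. (\<forall>\<alpha>. \<exists>x\<in>X. \<alpha> \<le> x) \<longrightarrow> card_eq X (UNIV :: 'k set))"

definition full_subsets :: "'k set set" where
  "full_subsets = {A. card_eq A (UNIV :: 'k set)}"

definition s_fun :: "'k::wellorder set \<Rightarrow> 'k \<Rightarrow> 'k" where
  "s_fun A \<alpha> = (LEAST \<beta>. \<beta> \<in> A \<and> \<alpha> < \<beta>)"

definition set_pt :: "'k::wellorder set \<Rightarrow> 'k \<Rightarrow> 'k set" where
  "set_pt E1 \<xi> = {\<zeta>. \<xi> \<le> \<zeta> \<and> \<zeta> < s_fun E1 \<xi>}"

definition set_club :: "'k::wellorder set \<Rightarrow> 'k set \<Rightarrow> 'k set" where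
  "set_club E2 E1 = (\<Union>\<xi>\<in>E2. set_pt E1 \<xi>)"

text \<open>Closed unbounded subsets of kappa.  Closedness: every nonzero alpha below which
  E is cofinal (necessarily a limit) belongs to E.\<close>
definition club :: "'k::wellorder set \<Rightarrow> bool" where
  "club E \<longleftrightarrow>
     (\<forall>\<beta>. \<exists>\<gamma>\<in>E. \<beta> \<le> \<gamma>) \<and>
     (\<forall>\<alpha>. (\<exists>\<beta>. \<beta> < \<alpha>) \<and> (\<forall>\<beta><\<alpha>. \<exists>\<gamma>\<in>E. \<beta> < \<gamma> \<and> \<gamma> < \<alpha>) \<longrightarrow> \<alpha> \<in> E)"

definition reaps :: "'k set \<Rightarrow> 'k set set \<Rightarrow> bool" where
  "reaps B F \<longleftrightarrow> (\<forall>A\<in>F. card_eq (A \<inter> B) (UNIV :: 'k set) \<and>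
                                card_eq (A \<inter> (UNIV - B)) (UNIV :: 'k set))"

definition unreaped :: "'k set set \<Rightarrow> bool" where
  "unreaped F \<longleftrightarrow> \<not> (\<exists>B. reaps B F)"

text \<open>|F| = r(kappa): F is an unreaped subfamily of [kappa]^kappa of minimal size.\<close>
definition has_size_reaping_number :: "'k set set \<Rightarrow> bool" where
  "has_size_reaping_number F \<longleftrightarrow>
     (\<forall>G :: 'k set set. G \<subseteq> full_subsets \<and> unreaped G \<longrightarrow> card_leq F G)"

definition le_star :: "('k::wellorder \<Rightarrow> 'k) \<Rightarrow> ('k \<Rightarrow> 'k) \<Rightarrow> bool" where
  "le_star f g \<longleftrightarrow> card_less {\<alpha>. g \<alpha> < f \<alpha>} (UNIV :: 'k set)"

definition dominating :: "('k::wellorder \<Rightarrow> 'k) set \<Rightarrow> bool" where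
  "dominating D \<longleftrightarrow> (\<forall>g. \<exists>f\<in>D. le_star g f)"

definition dominating_number_le :: "'k::wellorder itself \<Rightarrow> 'b set \<Rightarrow> bool" where
  "dominating_number_le _ X \<longleftrightarrow> (\<exists>D :: ('k \<Rightarrow> 'k) set. dominating D \<and> card_leq D X)"

end

theory Submission
  imports Defs "HOL-Library.Countable_Set_Type"
begin

lemma urc_countable_less:
  assumes urc: "uncountable_regular_cardinal TYPE('k::wellorder)"
    and c: "countable (X :: 'k set)"
  shows "card_less X (UNIV :: 'k set)"
proof -
  have u: "\<not> countable (UNIV :: 'k set)" using urc unfolding uncountable_regular_cardinal_def by blast
  have 1: "(card_of X, card_of (UNIV :: nat set)) \<in> ordLeq" using c countable_card_of_nat by blast
  have "(card_of (UNIV :: 'k set), card_of (UNIV :: nat set)) \<notin> ordLeq" using u countable_card_of_nat[of "UNIV :: 'k set"] by simp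
  hence 2: "(card_of (UNIV :: nat set), card_of (UNIV :: 'k set)) \<in> ordLess"
    using not_ordLeq_iff_ordLess[OF card_of_Well_order[of "UNIV :: nat set"] card_of_Well_order[of "UNIV :: 'k set"]] by simp
  show ?thesis unfolding card_less_def using ordLeq_ordLess_trans[OF 1 2] by simp
qed

lemma urc_bounded:
  assumes urc: "uncountable_regular_cardinal TYPE('k::wellorder)"
    and c: "card_less (X :: 'k set) (UNIV :: 'k set)"
  shows "\<exists>\<alpha>. \<forall>x\<in>X. x < \<alpha>"
proof (rule ccontr)
  assume "\<not> (\<exists>\<alpha>. \<forall>x\<in>X. x < \<alpha>)"
  hence "\<forall>\<alpha>. \<exists>x\<in>X. \<alpha> \<le> x" by (meson not_le)
  hence "card_eq X (UNIV :: 'k set)" using urc unfolding uncountable_regular_cardinal_def by blast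
  hence x: "(card_of X, card_of (UNIV :: 'k set)) \<in> ordIso" unfolding card_eq_def .
  have y: "(card_of X, card_of (UNIV :: 'k set)) \<in> ordLess" using c unfolding card_less_def .
  show False using not_ordLess_ordIso[OF y] x by (rule notE)
qed

lemma urc_sub_less:
  assumes urc: "uncountable_regular_cardinal TYPE('k::wellorder)"
    and s: "(X :: 'k set) \<subseteq> {\<beta>. \<beta> < \<alpha>}"
  shows "card_less X (UNIV :: 'k set)"
proof -
  have "card_less {\<beta>. \<beta> < \<alpha>} (UNIV :: 'k set)" using urc unfolding uncountable_regular_cardinal_def by blast
  thus ?thesis unfolding card_less_def using card_of_mono1[OF s] ordLeq_ordLess_trans by auto
qed

lemma urc_nomax:
  assumes urc: "uncountable_regular_cardinal TYPE('k::wellorder)"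
  shows "\<exists>c. (\<alpha>::'k) < c"
proof (rule ccontr)
  assume "\<not> (\<exists>c. \<alpha> < c)"
  hence "x < \<alpha> \<or> x = \<alpha>" for x by (meson linorder_neqE)
  hence U: "(UNIV :: 'k set) = {\<beta>. \<beta> < \<alpha>} \<union> {\<alpha>}" by blast
  have inf: "\<not> finite (UNIV :: 'k set)" using urc unfolding uncountable_regular_cardinal_def
    using uncountable_infinite by blast
  have 1: "(card_of {\<beta>. \<beta> < \<alpha>}, card_of (UNIV :: 'k set)) \<in> ordLess" using urc unfolding uncountable_regular_cardinal_def card_less_def by blast
  have 2: "(card_of {\<alpha>}, card_of (UNIV :: 'k set)) \<in> ordLess" using urc_countable_less[OF urc, of "{\<alpha>}"] unfolding card_less_def by simp
  have "(card_of ({\<beta>. \<beta> < \<alpha>} \<union> {\<alpha>}), card_of (UNIV :: 'k set)) \<in> ordLess" using card_of_Un_ordLess_infinite[OF inf 1 2] .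
  hence h: "(card_of (UNIV :: 'k set), card_of (UNIV :: 'k set)) \<in> ordLess" unfolding U[symmetric] .
  show False using not_ordLess_ordIso[OF h] card_of_refl[of "UNIV :: 'k set"] by (rule notE)
qed

lemma s_fun_prop:
  assumes urc: "uncountable_regular_cardinal TYPE('k::wellorder)"
    and unb: "\<forall>\<beta>. \<exists>\<gamma>\<in>A. \<beta> \<le> \<gamma>"
  shows "s_fun A (\<alpha>::'k) \<in> A \<and> \<alpha> < s_fun A \<alpha>"
proof -
  obtain c where "\<alpha> < c" using urc_nomax[OF urc] by blast
  then obtain \<gamma> where "\<gamma> \<in> A" "\<alpha> < \<gamma>" using unb by (meson order.strict_trans2)
  thus ?thesis unfolding s_fun_def using LeastI[of "\<lambda>\<beta>. \<beta> \<in> A \<and> \<alpha> < \<beta>" \<gamma>] by simp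
qed

lemma s_fun_le:
  assumes "\<gamma> \<in> A" "\<alpha> < \<gamma>"
  shows "s_fun A \<alpha> \<le> \<gamma>"
  using assms unfolding s_fun_def by (simp add: Least_le)

lemma full_unb:
  assumes urc: "uncountable_regular_cardinal TYPE('k::wellorder)"
    and A: "(A :: 'k set) \<in> full_subsets"
  shows "\<forall>\<beta>. \<exists>\<gamma>\<in>A. \<beta> \<le> \<gamma>"
proof (rule ccontr)
  assume "\<not> (\<forall>\<beta>. \<exists>\<gamma>\<in>A. \<beta> \<le> \<gamma>)"
  then obtain \<beta> where b: "\<forall>\<gamma>\<in>A. \<gamma> < \<beta>" by (meson not_le)
  hence "card_less A (UNIV :: 'k set)" using urc_sub_less[OF urc, of A \<beta>] by blast
  hence y: "(card_of A, card_of (UNIV :: 'k set)) \<in> ordLess" unfolding card_less_def .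
  have x: "(card_of A, card_of (UNIV :: 'k set)) \<in> ordIso" using A unfolding full_subsets_def card_eq_def by simp
  show False using not_ordLess_ordIso[OF y] x by (rule notE)
qed

lemma closure_club:
  assumes urc: "uncountable_regular_cardinal TYPE('k::wellorder)"
    and E1: "club (E1 :: 'k set)"
  shows "club {\<xi>\<in>E1. \<forall>\<beta><\<xi>. g \<beta> < \<xi>}"
proof -
  let ?E = "{\<xi>\<in>E1. \<forall>\<beta><\<xi>. g \<beta> < \<xi>}"
  have unb1: "\<forall>\<beta>. \<exists>\<gamma>\<in>E1. \<beta> \<le> \<gamma>" using E1 unfolding club_def by blast
  have cl1: "\<And>\<alpha>. (\<exists>\<beta>. \<beta> < \<alpha>) \<Longrightarrow> (\<forall>\<beta><\<alpha>. \<exists>\<gamma>\<in>E1. \<beta> < \<gamma> \<and> \<gamma> < \<alpha>) \<Longrightarrow> \<alpha> \<in> E1"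
    using E1 unfolding club_def by blast
  have step: "\<exists>c. c \<in> E1 \<and> b < c \<and> (\<forall>\<gamma>\<le>b. g \<gamma> < c)" for b :: 'k
  proof -
    obtain b' where b': "b < b'" using urc_nomax[OF urc] by blast
    have "g ` {\<gamma>. \<gamma> \<le> b} \<subseteq> g ` {\<gamma>. \<gamma> < b'}" using b' by auto
    have "card_less {\<gamma>. \<gamma> < b'} (UNIV :: 'k set)" using urc unfolding uncountable_regular_cardinal_def by blast
    hence l1: "(card_of {\<gamma>. \<gamma> < b'}, card_of (UNIV :: 'k set)) \<in> ordLess" unfolding card_less_def by simp
    have sub: "{\<gamma>. \<gamma> \<le> b} \<subseteq> {\<gamma>. \<gamma> < b'}" using b' by (auto intro: order.strict_trans1)
    have l2: "(card_of (g ` {\<gamma>. \<gamma> \<le> b}), card_of {\<gamma>. \<gamma> \<le> b}) \<in> ordLeq" by (rule card_of_image)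
    have l3: "(card_of {\<gamma>. \<gamma> \<le> b}, card_of {\<gamma>. \<gamma> < b'}) \<in> ordLeq" by (rule card_of_mono1[OF sub])
    have "card_less (g ` {\<gamma>. \<gamma> \<le> b}) (UNIV :: 'k set)"
      unfolding card_less_def by (rule ordLeq_ordLess_trans[OF l2 ordLeq_ordLess_trans[OF l3 l1]])
    then obtain N where N: "\<forall>x\<in>g ` {\<gamma>. \<gamma> \<le> b}. x < N" using urc_bounded[OF urc] by blast
    obtain c where c: "c \<in> E1" "max N b' \<le> c" using unb1 by blast
    show ?thesis using c N b' by (intro exI[of _ c]) auto
  qed
  define h where "h b = (SOME c. c \<in> E1 \<and> b < c \<and> (\<forall>\<gamma>\<le>b. g \<gamma> < c))" for b
  have hp: "h b \<in> E1 \<and> b < h b \<and> (\<forall>\<gamma>\<le>b. g \<gamma> < h b)" for b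
    unfolding h_def using someI_ex[OF step[of b]] .
  have unb: "\<exists>\<gamma>\<in>?E. \<beta> \<le> \<gamma>" for \<beta>
  proof -
    define b where "b n = (h ^^ n) \<beta>" for n
    have bS: "b (Suc n) = h (b n)" for n unfolding b_def by simp
    have "countable (range b)" by simp
    hence "card_less (range b) (UNIV :: 'k set)" using urc_countable_less[OF urc] by blast
    then obtain U where U: "\<forall>n. b n < U" using urc_bounded[OF urc] by blast
    define \<xi> where "\<xi> = (LEAST x. \<forall>n. b n \<le> x)"
    have ex: "\<exists>x. \<forall>n. b n \<le> x" using U less_imp_le by blast
    have ub: "\<forall>n. b n \<le> \<xi>" unfolding \<xi>_def by (rule LeastI_ex[OF ex])
    have gt: "b n < \<xi>" for n using ub[rule_format, of "Suc n"] hp[of "b n"] bS[of n] by auto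
    have below: "\<exists>n. \<beta>' < b n" if "\<beta>' < \<xi>" for \<beta>'
    proof (rule ccontr)
      assume "\<not> (\<exists>n. \<beta>' < b n)"
      hence "\<forall>n. b n \<le> \<beta>'" by (meson not_le)
      hence "\<xi> \<le> \<beta>'" unfolding \<xi>_def by (rule Least_le)
      thus False using that by simp
    qed
    have "\<xi> \<in> E1"
    proof (rule cl1)
      show "\<exists>\<beta>. \<beta> < \<xi>" using gt by blast
      show "\<forall>\<beta><\<xi>. \<exists>\<gamma>\<in>E1. \<beta> < \<gamma> \<and> \<gamma> < \<xi>"
      proof (intro allI impI)
        fix \<beta>' assume "\<beta>' < \<xi>"
        then obtain n where "\<beta>' < b n" using below by blast
        thus "\<exists>\<gamma>\<in>E1. \<beta>' < \<gamma> \<and> \<gamma> < \<xi>" using hp[of "b n"] gt[of "Suc n"] bS[of n]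
          by (metis order.strict_trans)
      qed
    qed
    moreover have "\<forall>\<gamma><\<xi>. g \<gamma> < \<xi>"
    proof (intro allI impI)
      fix \<gamma> assume "\<gamma> < \<xi>"
      then obtain n where "\<gamma> < b n" using below by blast
      thus "g \<gamma> < \<xi>" using hp[of "b n"] gt[of "Suc n"] bS[of n] by (metis less_imp_le order.strict_trans)
    qed
    moreover have "\<beta> \<le> \<xi>" using ub[rule_format, of 0] unfolding b_def by simp
    ultimately show ?thesis by blast
  qed
  have cl: "\<alpha> \<in> ?E" if a1: "\<exists>\<beta>. \<beta> < \<alpha>" and a2: "\<forall>\<beta><\<alpha>. \<exists>\<gamma>\<in>?E. \<beta> < \<gamma> \<and> \<gamma> < \<alpha>" for \<alpha>
  proof -
    have "\<alpha> \<in> E1" using cl1[OF a1] a2 by blast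
    moreover have "\<forall>\<beta><\<alpha>. g \<beta> < \<alpha>"
    proof (intro allI impI)
      fix \<beta> assume "\<beta> < \<alpha>"
      then obtain \<gamma> where "\<gamma> \<in> ?E" "\<beta> < \<gamma>" "\<gamma> < \<alpha>" using a2 by blast
      thus "g \<beta> < \<alpha>" by auto
    qed
    ultimately show ?thesis by blast
  qed
  show ?thesis unfolding club_def
  proof (intro conjI)
    show "\<forall>\<beta>. \<exists>\<gamma>\<in>?E. \<beta> \<le> \<gamma>" using unb by blast
    show "\<forall>\<alpha>. (\<exists>\<beta>. \<beta> < \<alpha>) \<and> (\<forall>\<beta><\<alpha>. \<exists>\<gamma>\<in>?E. \<beta> < \<gamma> \<and> \<gamma> < \<alpha>) \<longrightarrow> \<alpha> \<in> ?E"
      using cl by blast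
  qed
qed

theorem lemma3p4:
  fixes F :: "'k::wellorder set set"
  assumes "uncountable_regular_cardinal TYPE('k)"
    and "F \<subseteq> full_subsets"
    and "unreaped F"
    and "has_size_reaping_number F"
    and "\<exists>E1. club E1 \<and>
           (\<forall>E. club E \<and> E \<subseteq> E1 \<longrightarrow>
               (\<exists>A\<in>F. card_less (A - set_club E E1) (UNIV :: 'k set)))"
  shows "dominating_number_le TYPE('k) F"
proof -
  note urc = assms(1)
  obtain E1 where E1: "club E1" and H: "\<And>E. club E \<Longrightarrow> E \<subseteq> E1 \<Longrightarrow>
               (\<exists>A\<in>F. card_less (A - set_club E E1) (UNIV :: 'k set))" using assms(5) by blast
  have unb1: "\<forall>\<beta>. \<exists>\<gamma>\<in>E1. \<beta> \<le> \<gamma>" using E1 unfolding club_def by blast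
  define f where "f A = (\<lambda>\<alpha>. s_fun A (s_fun E1 \<alpha>))" for A
  have "dominating (f ` F)" unfolding dominating_def
  proof
    fix g :: "'k \<Rightarrow> 'k"
    let ?E = "{\<xi>\<in>E1. \<forall>\<beta><\<xi>. g \<beta> < \<xi>}"
    obtain A where A: "A \<in> F" and Al: "card_less (A - set_club ?E E1) (UNIV :: 'k set)"
      using H[OF closure_club[OF urc E1]] by blast
    have unbA: "\<forall>\<beta>. \<exists>\<gamma>\<in>A. \<beta> \<le> \<gamma>" using full_unb[OF urc] A assms(2) by blast
    obtain M where M: "\<forall>x\<in>A - set_club ?E E1. x < M" using urc_bounded[OF urc Al] by blast
    have key: "g \<alpha> \<le> f A \<alpha>" if aM: "M \<le> \<alpha>" for \<alpha>
    proof -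
      let ?e = "s_fun E1 \<alpha>" let ?a = "s_fun A ?e"
      have e: "?e \<in> E1" "\<alpha> < ?e" using s_fun_prop[OF urc unb1] by auto
      have a: "?a \<in> A" "?e < ?a" using s_fun_prop[OF urc unbA] by auto
      have Ma: "M < ?a" using aM e(2) a(2) by (meson order.strict_trans order.strict_trans1)
      have "?a \<in> set_club ?E E1"
      proof (rule ccontr)
        assume "?a \<notin> set_club ?E E1"
        hence "?a < M" using M a(1) by blast
        thus False using Ma by simp
      qed
      then obtain \<xi> where xi: "\<xi> \<in> ?E" "\<xi> \<le> ?a" "?a < s_fun E1 \<xi>"
        unfolding set_club_def set_pt_def by blast
      have "\<alpha> < \<xi>"
      proof (rule ccontr)
        assume "\<not> \<alpha> < \<xi>"
        hence "\<xi> < ?e" using e by (meson not_less order.strict_trans1)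
        hence "s_fun E1 \<xi> \<le> ?e" using s_fun_le e by blast
        thus False using xi a by simp
      qed
      hence "g \<alpha> < \<xi>" using xi by blast
      thus ?thesis using xi unfolding f_def by simp
    qed
    have "{\<alpha>. f A \<alpha> < g \<alpha>} \<subseteq> {\<beta>. \<beta> < M}"
    proof (rule subsetI)
      fix \<alpha> assume "\<alpha> \<in> {\<alpha>. f A \<alpha> < g \<alpha>}"
      hence lt: "f A \<alpha> < g \<alpha>" by simp
      show "\<alpha> \<in> {\<beta>. \<beta> < M}"
      proof (rule ccontr)
        assume "\<alpha> \<notin> {\<beta>. \<beta> < M}"
        hence "M \<le> \<alpha>" by (simp add: not_less)
        thus False using key[of \<alpha>] lt by simp
      qed
    qed
    hence "le_star g (f A)" unfolding le_star_def using urc_sub_less[OF urc] by blast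
    thus "\<exists>f'\<in>f ` F. le_star g f'" using A by blast
  qed
  moreover have "card_leq (f ` F) F" unfolding card_leq_def using card_of_image by simp
  ultimately show ?thesis unfolding dominating_number_le_def by blast
qed

end
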